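(* Fix $\delta>0$. Let (R) be the problem: maximize over $\{\mathbf Q_g\}\in\mathcal Q$ and $s\in[0,1]^{\mathcal K}$ the function $$F(\{\mathbf Q_g\},s)=\min_{g}\Big\{\frac{\sum_{k\in\mathcal K_g}s_k}{\tau_g|\mathcal K_g|}\min_{k\in\mathcal K_g}\big[r_k(\{\mathbf Q_\ell\})+\delta^{-1}(1-s_k)\big]\Big\},$$ which is equivalent to the epigraph problem: maximize $\alpha$ subject to $R_g\sum_{k\in\mathcal K_g}s_k\ge\tau_g|\mathcal K_g|\alpha^2$, $r_k(\{\mathbf Q_\ell\})+\delta^{-1}(1-s_k)\ge R_g$ for $k\in\mathcal K_g$, $0\le s_k\le1$, $\{\mathbf Q_g\}\in\mathcal Q$. Consider the iterative algorithm: start from any $\{\tilde{\mathbf Q}_\ell\}\in\mathcal Q$; at each iteration solve the convex problem maximize $\alpha$ over $\{\mathbf Q_g\},\{R_g\},\{s_k\},\alpha$ subject to $\begin{pmatrix}R_g&\alpha\sqrt{\tau_g|\mathcal K_g|}\\ \alpha\sqrt{\tau_g|\mathcal K_g|}&\sum_{k\in\mathcal K_g}s_k\end{pmatrix}\succeq\mathbf 0$ for all $g$, $\bar r_k(\{\mathbf Q_\ell\}\mid\{\tilde{\mathbf Q}_\ell\})+\delta^{-1}(1-s_k)\ge R_g$ for all $k\in\mathcal K_g$ and all $g$, $0\le s_k\le 1$, $\{\mathbf Q_g\}\in\mathcal Q$; then set $\tilde{\mathbf Q}_\ell$ equal to the obtained $\mathbf Q_\ell$ and repeat. Then every limit point of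 the sequence of iterates $(\{\mathbf Q_g\},\{s_k\})$ (together with the corresponding $\{R_g\},\alpha$) generated by this algorithm is a stationary point of (R).
   Context: Setting and notation as follows. $B$ BSs with $M$ antennas, powers $P_b\ge0$; users $\mathcal K$ partitioned into groups $\mathcal K_1,\dots,\mathcal K_G$; $\mathcal B_g$ the BSs serving group $g$; weights $\tau_g>0$; channels $\mathbf h_{b,k}\in\mathbb C^M$, $\mathbf h_k=[\mathbf h_{1,k}^H,\dots,\mathbf h_{B,k}^H]^H$; $\{\mathbf Q\}_{b,b'}$ the $(b,b')$-th $M\times M$ block. $\mathcal Q$: tuples of Hermitian PSD $MB\times MB$ matrices $(\mathbf Q_1,\dots,\mathbf Q_G)$ with $\sum_g\mathrm{tr}(\{\mathbf Q_g\}_{b,b})\le P_b$ for all $b$ and $\{\mathbf Q_g\}_{b,b'}=\mathbf 0$ if $b\notin\mathcal B_g$ or $b'\notin\mathcal B_g$. For $k\in\mathcal K_g$, $r_k(\{\mathbf Q_\ell\})=\log_2\big(1+\frac{\mathrm{tr}(\mathbf Q_g\mathbf h_k\mathbf h_k^H)}{\sum_{\ell\neq g}\mathrm{tr}(\mathbf Q_\ell\mathbf h_k\mathbf h_k^H)+1}\big)$ and $\bar r_k(\{\mathbf Q_\ell\}\mid\{\tilde{\mathbf Q}_\ell\})=\log_2\big(1+\sum_{\ell=1}^G\mathrm{tr}(\mathbf Q_\ell\mathbf h_k\mathbf h_k^H)\big)-\log_2\big(1+\sum_{\ell\ne g}\mathrm{tr}(\tilde{\mathbf Q}_\ell\mathbf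 h_k\mathbf h_k^H)\big)-\frac{\sum_{\ell\ne g}\mathrm{tr}((\mathbf Q_\ell-\tilde{\mathbf Q}_\ell)\mathbf h_k\mathbf h_k^H)}{[1+\sum_{\ell\ne g}\mathrm{tr}(\tilde{\mathbf Q}_\ell\mathbf h_k\mathbf h_k^H)]\ln 2}$. A stationary point of a maximization problem over a convex feasible set is a feasible point at which the directional derivative of the objective along every feasible direction is nonpositive. *)

theory Defs
  imports "HOL-Analysis.Analysis"
begin

text \<open>An MB x MB complex matrix is represented as a function on index pairs (b,i),
  b < B (base station), i < M (antenna); only entries on idx B M are meaningful.
  A stacked channel vector h_k is a function (b,i) |-> i-th entry of h_{b,k}.\<close>

type_synonym cmat = "nat \<times> nat \<Rightarrow> nat \<times> nat \<Rightarrow> complex"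
type_synonym cvec = "nat \<times> nat \<Rightarrow> complex"

definition idx :: "nat \<Rightarrow> nat \<Rightarrow> (nat \<times> nat) set" where
  "idx B M = {0..<B} \<times> {0..<M}"

definition herm_psd :: "nat \<Rightarrow> nat \<Rightarrow> cmat \<Rightarrow> bool" where
  "herm_psd B M A \<longleftrightarrow>
     (\<forall>x\<in>idx B M. \<forall>y\<in>idx B M. A y x = cnj (A x y)) \<and>
     (\<forall>v::cvec. 0 \<le> Re (\<Sum>x\<in>idx B M. \<Sum>y\<in>idx B M. cnj (v x) * A x y * v y))"

text \<open>tr(A h h^H) (real part; it is real for Hermitian A).\<close>
definition trhh :: "nat \<Rightarrow> nat \<Rightarrow> cmat \<Rightarrow> cvec \<Rightarrow> real" where
  "trhh B M A h = Re (\<Sum>x\<in>idx B M. \<Sum>y\<in>idx B M. A x y * (h y * cnj (h x)))"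

definition blocktr :: "nat \<Rightarrow> cmat \<Rightarrow> nat \<Rightarrow> real" where
  "blocktr M A b = Re (\<Sum>i<M. A (b,i) (b,i))"

text \<open>The feasible set \<Q> of covariance tuples (Q_0,...,Q_{G-1}); groups are 0..G-1,
  base stations 0..B-1, Bg g is the set of BSs serving group g.\<close>
definition feasQ :: "nat \<Rightarrow> nat \<Rightarrow> nat \<Rightarrow> (nat \<Rightarrow> real) \<Rightarrow> (nat \<Rightarrow> nat set)
    \<Rightarrow> (nat \<Rightarrow> cmat) \<Rightarrow> bool" where
  "feasQ B M G P Bg Q \<longleftrightarrow>
     (\<forall>g<G. herm_psd B M (Q g)) \<and>
     (\<forall>b<B. (\<Sum>g<G. blocktr M (Q g) b) \<le> P b) \<and>
     (\<forall>g<G. \<forall>b<B. \<forall>b'<B. (b \<notin> Bg g \<or> b' \<notin> Bg g) \<longrightarrow>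
        (\<forall>i<M. \<forall>j<M. Q g (b,i) (b',j) = 0))"

definition rate :: "nat \<Rightarrow> nat \<Rightarrow> nat \<Rightarrow> cvec \<Rightarrow> (nat \<Rightarrow> cmat) \<Rightarrow> nat \<Rightarrow> real" where
  "rate B M G hk Q g =
     log 2 (1 + trhh B M (Q g) hk / ((\<Sum>l\<in>{0..<G} - {g}. trhh B M (Q l) hk) + 1))"

definition rate_bar :: "nat \<Rightarrow> nat \<Rightarrow> nat \<Rightarrow> cvec \<Rightarrow> (nat \<Rightarrow> cmat) \<Rightarrow> (nat \<Rightarrow> cmat)
    \<Rightarrow> nat \<Rightarrow> real" where
  "rate_bar B M G hk Q Qt g =
     log 2 (1 + (\<Sum>l<G. trhh B M (Q l) hk))
     - log 2 (1 + (\<Sum>l\<in>{0..<G} - {g}. trhh B M (Qt l) hk))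
     - (\<Sum>l\<in>{0..<G} - {g}. trhh B M (Q l) hk - trhh B M (Qt l) hk)
       / ((1 + (\<Sum>l\<in>{0..<G} - {g}. trhh B M (Qt l) hk)) * ln 2)"

definition objF :: "nat \<Rightarrow> nat \<Rightarrow> nat \<Rightarrow> (nat \<Rightarrow> 'u set) \<Rightarrow> (nat \<Rightarrow> real) \<Rightarrow> real
    \<Rightarrow> ('u \<Rightarrow> cvec) \<Rightarrow> (nat \<Rightarrow> cmat) \<Rightarrow> ('u \<Rightarrow> real) \<Rightarrow> real" where
  "objF B M G Kg \<tau> \<delta> h Q s =
     Min ((\<lambda>g. (\<Sum>k\<in>Kg g. s k) / (\<tau> g * real (card (Kg g)))
               * Min ((\<lambda>k. rate B M G (h k) Q g + (1 - s k) / \<delta>) ` Kg g)) ` {..<G})"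

definition feasR :: "nat \<Rightarrow> nat \<Rightarrow> nat \<Rightarrow> (nat \<Rightarrow> real) \<Rightarrow> (nat \<Rightarrow> nat set) \<Rightarrow> 'u set
    \<Rightarrow> (nat \<Rightarrow> cmat) \<Rightarrow> ('u \<Rightarrow> real) \<Rightarrow> bool" where
  "feasR B M G P Bg K Q s \<longleftrightarrow> feasQ B M G P Bg Q \<and> (\<forall>k\<in>K. 0 \<le> s k \<and> s k \<le> 1)"

definition stationaryR :: "nat \<Rightarrow> nat \<Rightarrow> nat \<Rightarrow> (nat \<Rightarrow> real) \<Rightarrow> (nat \<Rightarrow> nat set)
    \<Rightarrow> (nat \<Rightarrow> 'u set) \<Rightarrow> (nat \<Rightarrow> real) \<Rightarrow> real \<Rightarrow> ('u \<Rightarrow> cvec)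
    \<Rightarrow> (nat \<Rightarrow> cmat) \<Rightarrow> ('u \<Rightarrow> real) \<Rightarrow> bool" where
  "stationaryR B M G P Bg Kg \<tau> \<delta> h Q s \<longleftrightarrow>
     feasR B M G P Bg (\<Union>g<G. Kg g) Q s \<and>
     (\<forall>Q' s'. feasR B M G P Bg (\<Union>g<G. Kg g) Q' s' \<longrightarrow>
        (\<exists>D. ((\<lambda>t. (objF B M G Kg \<tau> \<delta> h
                    (\<lambda>g x y. Q g x y + complex_of_real t * (Q' g x y - Q g x y))
                    (\<lambda>k. s k + t * (s' k - s k))
                  - objF B M G Kg \<tau> \<delta> h Q s) / t) \<longlongrightarrow> D) (at_right 0)
             \<and> D \<le> 0))"

text \<open>The 2x2 real symmetric LMI is written
  via its defining quadratic form.\<close>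
definition feasSub :: "nat \<Rightarrow> nat \<Rightarrow> nat \<Rightarrow> (nat \<Rightarrow> real) \<Rightarrow> (nat \<Rightarrow> nat set)
    \<Rightarrow> (nat \<Rightarrow> 'u set) \<Rightarrow> (nat \<Rightarrow> real) \<Rightarrow> real \<Rightarrow> ('u \<Rightarrow> cvec) \<Rightarrow> (nat \<Rightarrow> cmat)
    \<Rightarrow> (nat \<Rightarrow> cmat) \<Rightarrow> (nat \<Rightarrow> real) \<Rightarrow> ('u \<Rightarrow> real) \<Rightarrow> real \<Rightarrow> bool" where
  "feasSub B M G P Bg Kg \<tau> \<delta> h Qt Q R s \<alpha> \<longleftrightarrow>
     (\<forall>g<G. \<forall>u v :: real.
        0 \<le> u\<^sup>2 * R g + 2 * u * v * (\<alpha> * sqrt (\<tau> g * real (card (Kg g))))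
             + v\<^sup>2 * (\<Sum>k\<in>Kg g. s k)) \<and>
     (\<forall>g<G. \<forall>k\<in>Kg g. rate_bar B M G (h k) Q Qt g + (1 - s k) / \<delta> \<ge> R g) \<and>
     (\<forall>k\<in>(\<Union>g<G. Kg g). 0 \<le> s k \<and> s k \<le> 1) \<and>
     feasQ B M G P Bg Q"

definition optSub :: "nat \<Rightarrow> nat \<Rightarrow> nat \<Rightarrow> (nat \<Rightarrow> real) \<Rightarrow> (nat \<Rightarrow> nat set)
    \<Rightarrow> (nat \<Rightarrow> 'u set) \<Rightarrow> (nat \<Rightarrow> real) \<Rightarrow> real \<Rightarrow> ('u \<Rightarrow> cvec) \<Rightarrow> (nat \<Rightarrow> cmat)
    \<Rightarrow> (nat \<Rightarrow> cmat) \<Rightarrow> (nat \<Rightarrow> real) \<Rightarrow> ('u \<Rightarrow> real) \<Rightarrow> real \<Rightarrow> bool" where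
  "optSub B M G P Bg Kg \<tau> \<delta> h Qt Q R s \<alpha> \<longleftrightarrow>
     feasSub B M G P Bg Kg \<tau> \<delta> h Qt Q R s \<alpha> \<and>
     (\<forall>Q' R' s' \<alpha>'. feasSub B M G P Bg Kg \<tau> \<delta> h Qt Q' R' s' \<alpha>' \<longrightarrow> \<alpha>' \<le> \<alpha>)"

definition limit_point :: "nat \<Rightarrow> nat \<Rightarrow> nat \<Rightarrow> 'u set \<Rightarrow> (nat \<Rightarrow> nat \<Rightarrow> cmat)
    \<Rightarrow> (nat \<Rightarrow> 'u \<Rightarrow> real) \<Rightarrow> (nat \<Rightarrow> cmat) \<Rightarrow> ('u \<Rightarrow> real) \<Rightarrow> bool" where
  "limit_point B M G K Qs ss Qlim slim \<longleftrightarrow>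
     (\<exists>\<sigma>. strict_mono \<sigma> \<and>
        (\<forall>g<G. \<forall>x\<in>idx B M. \<forall>y\<in>idx B M. (\<lambda>n. Qs (\<sigma> n) g x y) \<longlonglongrightarrow> Qlim g x y) \<and>
        (\<forall>k\<in>K. (\<lambda>n. ss (\<sigma> n) k) \<longlonglongrightarrow> slim k))"

end

theory Submission
  imports Defs
begin



definition rd :: "(real \<Rightarrow> real) \<Rightarrow> real \<Rightarrow> bool" where
  "rd f D \<longleftrightarrow> ((\<lambda>t. (f t - f 0) / t) \<longlongrightarrow> D) (at_right 0)"

lemma rd_cont: assumes "rd f D" shows "(f \<longlongrightarrow> f 0) (at_right 0)"
proof -
  have "((\<lambda>t. f 0 + t * ((f t - f 0) / t)) \<longlongrightarrow> f 0 + 0 * D) (at_right 0)"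
    using assms unfolding rd_def
    by (intro tendsto_intros) (auto intro: tendsto_ident_at)
  moreover have "eventually (\<lambda>t. f 0 + t * ((f t - f 0) / t) = f t) (at_right (0::real))"
    using eventually_at_right_less[of 0] by (auto elim!: eventually_mono)
  ultimately show ?thesis by (simp add: tendsto_cong)
qed

lemma rd_deriv: assumes "(f has_real_derivative D) (at 0)" shows "rd f D"
proof -
  have "(f has_real_derivative D) (at 0 within {0<..})"
    using assms has_field_derivative_at_within by blast
  then show ?thesis unfolding rd_def has_field_derivative_iff by simp
qed

lemma rd_mult: assumes "rd f Df" "rd g Dg" shows "rd (\<lambda>t. f t * g t) (f 0 * Dg + g 0 * Df)"
proof -
  have "((\<lambda>t. f t * ((g t - g 0)/t) + g 0 * ((f t - f 0)/t)) \<longlongrightarrow> f 0 * Dg + g 0 * Df) (at_right 0)"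
    using assms rd_cont[OF assms(1)] unfolding rd_def by (intro tendsto_intros) auto
  moreover have "\<And>t. f t * ((g t - g 0)/t) + g 0 * ((f t - f 0)/t) = (f t * g t - f 0 * g 0) / t"
    by (simp add: field_simps diff_divide_distrib)
  ultimately show ?thesis unfolding rd_def by simp
qed

lemma rd_min: assumes "rd f Df" "rd g Dg" shows "\<exists>D. rd (\<lambda>t. min (f t) (g t)) D"
proof (cases "f 0 = g 0")
  case True
  have L: "((\<lambda>t. min ((f t - f 0)/t) ((g t - g 0)/t)) \<longlongrightarrow> min Df Dg) (at_right 0)"
    using assms unfolding rd_def by (intro tendsto_intros)
  have E: "eventually (\<lambda>t. min ((f t - f 0)/t) ((g t - g 0)/t) = (min (f t) (g t) - min (f 0) (g 0))/t) (at_right (0::real))"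
    using eventually_at_right_less[of 0]
  proof (rule eventually_mono)
    fix t :: real assume t: "0 < t"
    have "min ((f t - f 0)/t) ((g t - g 0)/t) = min (f t - f 0) (g t - g 0) / t"
      using t by (simp add: min_divide_distrib_right)
    also have "min (f t - f 0) (g t - g 0) = min (f t) (g t) - min (f 0) (g 0)" using True by (simp add: min_def)
    finally show "min ((f t - f 0)/t) ((g t - g 0)/t) = (min (f t) (g t) - min (f 0) (g 0))/t" .
  qed
  have "((\<lambda>t. (min (f t) (g t) - min (f 0) (g 0))/t) \<longlongrightarrow> min Df Dg) (at_right 0)"
    by (rule tendsto_cong[THEN iffD1, OF E L])
  then show ?thesis unfolding rd_def by blast
next
  case False
  then consider "f 0 < g 0" | "g 0 < f 0" by linarith
  then show ?thesis
  proof cases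
    case 1
    have "((\<lambda>t. g t - f t) \<longlongrightarrow> g 0 - f 0) (at_right 0)"
      using rd_cont[OF assms(1)] rd_cont[OF assms(2)] by (intro tendsto_intros)
    from order_tendstoD(1)[OF this, of 0] have "eventually (\<lambda>t. g t - f t > 0) (at_right 0)" using 1 by simp
    then have "eventually (\<lambda>t. (f t - f 0)/t = (min (f t) (g t) - min (f 0) (g 0))/t) (at_right (0::real))"
      using 1 by (auto elim!: eventually_mono)
    then have "((\<lambda>t. (min (f t) (g t) - min (f 0) (g 0))/t) \<longlongrightarrow> Df) (at_right 0)"
      using assms(1) unfolding rd_def by (rule tendsto_cong[THEN iffD1])
    then show ?thesis unfolding rd_def by blast
  next
    case 2
    have "((\<lambda>t. f t - g t) \<longlongrightarrow> f 0 - g 0) (at_right 0)"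
      using rd_cont[OF assms(1)] rd_cont[OF assms(2)] by (intro tendsto_intros)
    from order_tendstoD(1)[OF this, of 0] have "eventually (\<lambda>t. f t - g t > 0) (at_right 0)" using 2 by simp
    then have "eventually (\<lambda>t. (g t - g 0)/t = (min (f t) (g t) - min (f 0) (g 0))/t) (at_right (0::real))"
      using 2 by (auto elim!: eventually_mono)
    then have "((\<lambda>t. (min (f t) (g t) - min (f 0) (g 0))/t) \<longlongrightarrow> Dg) (at_right 0)"
      using assms(2) unfolding rd_def by (rule tendsto_cong[THEN iffD1])
    then show ?thesis unfolding rd_def by blast
  qed
qed

lemma rd_Min:
  assumes "finite I" "I \<noteq> {}" "\<forall>i\<in>I. \<exists>D. rd (\<lambda>t. f t i) D"
  shows "\<exists>D. rd (\<lambda>t. Min ((\<lambda>i. f t i) ` I)) D"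
  using assms
proof (induction I rule: finite_ne_induct)
  case (singleton x) then show ?case by simp
next
  case (insert x F)
  obtain D1 where "rd (\<lambda>t. f t x) D1" using insert by auto
  moreover obtain D2 where "rd (\<lambda>t. Min ((\<lambda>i. f t i) ` F)) D2" using insert by auto
  ultimately obtain D where "rd (\<lambda>t. min (f t x) (Min ((\<lambda>i. f t i) ` F))) D" using rd_min by blast
  moreover have "\<And>t. Min ((\<lambda>i. f t i) ` insert x F) = min (f t x) (Min ((\<lambda>i. f t i) ` F))"
    using insert by (simp add: Min_insert)
  ultimately show ?case by auto
qed

lemma tendsto_Min_fin:
  fixes f :: "'a \<Rightarrow> 'b \<Rightarrow> real"
  assumes "finite I" "I \<noteq> {}" "\<forall>i\<in>I. ((\<lambda>n. f n i) \<longlongrightarrow> l i) F"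
  shows "((\<lambda>n. Min ((\<lambda>i. f n i) ` I)) \<longlongrightarrow> Min (l ` I)) F"
  using assms
proof (induction I rule: finite_ne_induct)
  case (singleton x) then show ?case by simp
next
  case (insert x A)
  have "((\<lambda>n. Min ((\<lambda>i. f n i) ` A)) \<longlongrightarrow> Min (l ` A)) F" using insert by auto
  moreover have "((\<lambda>n. f n x) \<longlongrightarrow> l x) F" using insert by auto
  ultimately have "((\<lambda>n. min (f n x) (Min ((\<lambda>i. f n i) ` A))) \<longlongrightarrow> min (l x) (Min (l ` A))) F"
    by (metis (no_types) tendsto_min)
  then show ?case using insert by (simp add: Min_insert)
qed

lemma Min_diff_le:
  fixes f g :: "'a \<Rightarrow> real"
  assumes "finite I" "I \<noteq> {}"
  shows "Min (f ` I) - Min (g ` I) \<le> (\<Sum>i\<in>I. \<bar>f i - g i\<bar>)"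
proof -
  obtain j where j: "j \<in> I" "g j = Min (g ` I)"
    using assms by (metis (mono_tags, opaque_lifting) Min_in empty_is_image finite_imageI imageE)
  have "Min (f ` I) \<le> f j" using assms j by simp
  moreover have "\<bar>f j - g j\<bar> \<le> (\<Sum>i\<in>I. \<bar>f i - g i\<bar>)"
    using assms j by (intro member_le_sum) auto
  ultimately show ?thesis using j by linarith
qed



definition Obj :: "nat \<Rightarrow> (nat \<Rightarrow> 'u set) \<Rightarrow> (nat \<Rightarrow> real) \<Rightarrow> ('u \<Rightarrow> real) \<Rightarrow> (nat \<Rightarrow> 'u \<Rightarrow> real) \<Rightarrow> real" where
  "Obj G Kg \<tau> s b = Min ((\<lambda>g. (\<Sum>k\<in>Kg g. s k) / (\<tau> g * real (card (Kg g))) * Min ((\<lambda>k. b g k) ` Kg g)) ` {..<G})"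

lemma Obj_tendsto:
  assumes G: "G \<ge> 1" and fin: "\<forall>g<G. finite (Kg g)" and ne: "\<forall>g<G. Kg g \<noteq> {}"
    and s: "\<forall>g<G. \<forall>k\<in>Kg g. ((\<lambda>n. s n k) \<longlongrightarrow> sl k) F"
    and b: "\<forall>g<G. \<forall>k\<in>Kg g. ((\<lambda>n. b n g k) \<longlongrightarrow> bl g k) F"
  shows "((\<lambda>n. Obj G Kg \<tau> (s n) (b n)) \<longlongrightarrow> Obj G Kg \<tau> sl bl) F"
  unfolding Obj_def
proof (rule tendsto_Min_fin)
  show "finite {..<G}" by simp
  show "{..<G} \<noteq> {}" using G by (auto simp: lessThan_empty_iff)
  show "\<forall>g\<in>{..<G}. ((\<lambda>n. (\<Sum>k\<in>Kg g. s n k) / (\<tau> g * real (card (Kg g))) * Min ((\<lambda>k. b n g k) ` Kg g))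
     \<longlongrightarrow> (\<Sum>k\<in>Kg g. sl k) / (\<tau> g * real (card (Kg g))) * Min (bl g ` Kg g)) F"
  proof
    fix g assume "g \<in> {..<G}"
    then have g: "g < G" by simp
    have "((\<lambda>n. Min ((\<lambda>k. b n g k) ` Kg g)) \<longlongrightarrow> Min (bl g ` Kg g)) F"
      using fin ne b g by (intro tendsto_Min_fin) auto
    moreover have "((\<lambda>n. (\<Sum>k\<in>Kg g. s n k)) \<longlongrightarrow> (\<Sum>k\<in>Kg g. sl k)) F"
      using s g by (intro tendsto_sum) auto
    ultimately show "((\<lambda>n. (\<Sum>k\<in>Kg g. s n k) / (\<tau> g * real (card (Kg g))) * Min ((\<lambda>k. b n g k) ` Kg g))
     \<longlongrightarrow> (\<Sum>k\<in>Kg g. sl k) / (\<tau> g * real (card (Kg g))) * Min (bl g ` Kg g)) F"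
      unfolding divide_inverse by (intro tendsto_mult tendsto_mult_right)
  qed
qed

lemma Obj_rd:
  assumes G: "G \<ge> 1" and fin: "\<forall>g<G. finite (Kg g)" and ne: "\<forall>g<G. Kg g \<noteq> {}"
    and s: "\<forall>g<G. \<exists>D. rd (\<lambda>t. (\<Sum>k\<in>Kg g. s t k) / (\<tau> g * real (card (Kg g)))) D"
    and b: "\<forall>g<G. \<forall>k\<in>Kg g. \<exists>D. rd (\<lambda>t. b t g k) D"
  shows "\<exists>D. rd (\<lambda>t. Obj G Kg \<tau> (s t) (b t)) D"
  unfolding Obj_def
proof (rule rd_Min[where f = "\<lambda>t g. (\<Sum>k\<in>Kg g. s t k) / (\<tau> g * real (card (Kg g))) * Min ((\<lambda>k. b t g k) ` Kg g)"])
  show "finite {..<G}" by simp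
  show "{..<G} \<noteq> {}" using G by (auto simp: lessThan_empty_iff)
  show "\<forall>g\<in>{..<G}. \<exists>D. rd (\<lambda>t. (\<Sum>k\<in>Kg g. s t k) / (\<tau> g * real (card (Kg g))) * Min ((\<lambda>k. b t g k) ` Kg g)) D"
  proof
    fix g assume "g \<in> {..<G}"
    then have g: "g < G" by simp
    obtain D1 where "rd (\<lambda>t. Min ((\<lambda>k. b t g k) ` Kg g)) D1"
      using rd_Min[of "Kg g" "\<lambda>t k. b t g k"] fin ne b g by auto
    moreover obtain D2 where "rd (\<lambda>t. (\<Sum>k\<in>Kg g. s t k) / (\<tau> g * real (card (Kg g)))) D2"
      using s g by auto
    ultimately show "\<exists>D. rd (\<lambda>t. (\<Sum>k\<in>Kg g. s t k) / (\<tau> g * real (card (Kg g))) * Min ((\<lambda>k. b t g k) ` Kg g)) D"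
      using rd_mult by blast
  qed
qed

lemma Min_abs_diff_le:
  fixes f g :: "'a \<Rightarrow> real"
  assumes "finite I" "I \<noteq> {}"
  shows "\<bar>Min (f ` I) - Min (g ` I)\<bar> \<le> (\<Sum>i\<in>I. \<bar>f i - g i\<bar>)"
proof -
  have "Min (f ` I) - Min (g ` I) \<le> (\<Sum>i\<in>I. \<bar>f i - g i\<bar>)" using Min_diff_le[OF assms] .
  moreover have "Min (g ` I) - Min (f ` I) \<le> (\<Sum>i\<in>I. \<bar>g i - f i\<bar>)" using Min_diff_le[OF assms] .
  moreover have "(\<Sum>i\<in>I. \<bar>g i - f i\<bar>) = (\<Sum>i\<in>I. \<bar>f i - g i\<bar>)" by (simp add: abs_minus_commute)
  ultimately show ?thesis by linarith
qed

lemma Obj_diff: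
  assumes G: "G \<ge> 1" and fin: "\<forall>g<G. finite (Kg g)" and ne: "\<forall>g<G. Kg g \<noteq> {}"
  shows "Obj G Kg \<tau> s b1 - Obj G Kg \<tau> s b2 \<le>
    (\<Sum>g<G. \<bar>(\<Sum>k\<in>Kg g. s k) / (\<tau> g * real (card (Kg g)))\<bar> * (\<Sum>k\<in>Kg g. \<bar>b1 g k - b2 g k\<bar>))"
proof -
  define a where "a g = (\<Sum>k\<in>Kg g. s k) / (\<tau> g * real (card (Kg g)))" for g
  have "Obj G Kg \<tau> s b1 - Obj G Kg \<tau> s b2 \<le> (\<Sum>g<G. \<bar>a g * Min (b1 g ` Kg g) - a g * Min (b2 g ` Kg g)\<bar>)"
    unfolding Obj_def a_def[symmetric] using G
    by (intro Min_diff_le[where f = "\<lambda>g. a g * Min (b1 g ` Kg g)" and g = "\<lambda>g. a g * Min (b2 g ` Kg g)", simplified]) (auto simp: lessThan_empty_iff)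
  also have "\<dots> \<le> (\<Sum>g<G. \<bar>a g\<bar> * (\<Sum>k\<in>Kg g. \<bar>b1 g k - b2 g k\<bar>))"
  proof (rule sum_mono)
    fix g assume "g \<in> {..<G}"
    then have "\<bar>Min (b1 g ` Kg g) - Min (b2 g ` Kg g)\<bar> \<le> (\<Sum>k\<in>Kg g. \<bar>b1 g k - b2 g k\<bar>)"
      using fin ne by (intro Min_abs_diff_le) auto
    then show "\<bar>a g * Min (b1 g ` Kg g) - a g * Min (b2 g ` Kg g)\<bar> \<le> \<bar>a g\<bar> * (\<Sum>k\<in>Kg g. \<bar>b1 g k - b2 g k\<bar>)"
      by (metis abs_ge_zero abs_mult mult_left_mono right_diff_distrib)
  qed
  finally show ?thesis unfolding a_def .
qed

lemma lmi_imp: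
  fixes R S \<alpha> c :: real
  assumes c: "c > 0" and q: "\<forall>u v. 0 \<le> u\<^sup>2 * R + 2 * u * v * (\<alpha> * sqrt c) + v\<^sup>2 * S"
  shows "0 \<le> R \<and> 0 \<le> S \<and> \<alpha>\<^sup>2 * c \<le> R * S"
proof -
  have R: "0 \<le> R" using q[rule_format, of 1 0] by simp
  have S: "0 \<le> S" using q[rule_format, of 0 1] by simp
  have "\<alpha>\<^sup>2 * c \<le> R * S"
  proof (cases "S = 0")
    case True
    have "\<alpha> * sqrt c = 0"
    proof (rule ccontr)
      assume ne: "\<alpha> * sqrt c \<noteq> 0"
      have "0 \<le> 1 * R + 2 * (- (R + 1) / (2 * (\<alpha> * sqrt c))) * (\<alpha> * sqrt c)"
        using q[rule_format, of 1 "- (R + 1) / (2 * (\<alpha> * sqrt c))"] True by simp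
      also have "\<dots> = -1" using ne by (simp add: field_simps)
      finally show False by simp
    qed
    then show ?thesis using c True by simp
  next
    case False
    then have Sp: "S > 0" using S by simp
    have "0 \<le> S\<^sup>2 * R + 2 * S * (- \<alpha> * sqrt c) * (\<alpha> * sqrt c) + (- \<alpha> * sqrt c)\<^sup>2 * S"
      using q[rule_format, of S "- \<alpha> * sqrt c"] by simp
    also have "\<dots> = S * (R * S - \<alpha>\<^sup>2 * c)" using c by (simp add: power2_eq_square algebra_simps)
    finally show ?thesis using Sp by (simp add: zero_le_mult_iff)
  qed
  then show ?thesis using R S by simp
qed

lemma quad_nonneg:
  fixes R S \<beta> u v :: real
  assumes "R > 0" "\<beta>\<^sup>2 \<le> R * S"
  shows "0 \<le> u\<^sup>2 * R + 2 * u * v * \<beta> + v\<^sup>2 * S"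
proof -
  have "R * (u\<^sup>2 * R + 2 * u * v * \<beta> + v\<^sup>2 * S) = (R * u + \<beta> * v)\<^sup>2 + (R * S - \<beta>\<^sup>2) * v\<^sup>2"
    by (simp add: power2_eq_square algebra_simps)
  also have "\<dots> \<ge> 0" using assms by simp
  finally show ?thesis using assms(1) by (simp add: zero_le_mult_iff)
qed

lemma Obj_lower:
  assumes G: "G \<ge> 1" and fin: "\<forall>g<G. finite (Kg g)" and ne: "\<forall>g<G. Kg g \<noteq> {}"
    and tau: "\<forall>g<G. \<tau> g > 0"
    and lmi: "\<forall>g<G. \<forall>u v. 0 \<le> u\<^sup>2 * R g + 2 * u * v * (\<alpha> * sqrt (\<tau> g * real (card (Kg g)))) + v\<^sup>2 * (\<Sum>k\<in>Kg g. s k)"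
    and Rb: "\<forall>g<G. \<forall>k\<in>Kg g. R g \<le> b g k"
  shows "\<alpha>\<^sup>2 \<le> Obj G Kg \<tau> s b"
  unfolding Obj_def
proof (subst Min_ge_iff)
  show "finite ((\<lambda>g. (\<Sum>k\<in>Kg g. s k) / (\<tau> g * real (card (Kg g))) * Min (b g ` Kg g)) ` {..<G})" by simp
  show "(\<lambda>g. (\<Sum>k\<in>Kg g. s k) / (\<tau> g * real (card (Kg g))) * Min (b g ` Kg g)) ` {..<G} \<noteq> {}" using G by (auto simp: lessThan_empty_iff)
  show "\<forall>a\<in>(\<lambda>g. (\<Sum>k\<in>Kg g. s k) / (\<tau> g * real (card (Kg g))) * Min (b g ` Kg g)) ` {..<G}. \<alpha>\<^sup>2 \<le> a"
  proof
    fix a assume "a \<in> (\<lambda>g. (\<Sum>k\<in>Kg g. s k) / (\<tau> g * real (card (Kg g))) * Min (b g ` Kg g)) ` {..<G}"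
    then obtain g where g: "g < G" and a: "a = (\<Sum>k\<in>Kg g. s k) / (\<tau> g * real (card (Kg g))) * Min (b g ` Kg g)" by auto
    define c where "c = \<tau> g * real (card (Kg g))"
    define S where "S = (\<Sum>k\<in>Kg g. s k)"
    have c: "c > 0" unfolding c_def using tau fin ne g by (simp add: card_gt_0_iff)
    have L: "0 \<le> R g \<and> 0 \<le> S \<and> \<alpha>\<^sup>2 * c \<le> R g * S"
      using lmi_imp[OF c, of "R g" \<alpha> S] lmi g unfolding c_def S_def by blast
    have RM: "R g \<le> Min (b g ` Kg g)" using Rb g fin ne by (subst Min_ge_iff) auto
    have "\<alpha>\<^sup>2 \<le> S / c * R g" using L c by (simp add: field_simps)
    also have "\<dots> \<le> S / c * Min (b g ` Kg g)" using RM L c by (intro mult_left_mono) auto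
    finally show "\<alpha>\<^sup>2 \<le> a" unfolding a c_def S_def .
  qed
qed

lemma Obj_upper:
  assumes G: "G \<ge> 1" and fin: "\<forall>g<G. finite (Kg g)" and ne: "\<forall>g<G. Kg g \<noteq> {}"
    and tau: "\<forall>g<G. \<tau> g > 0"
    and pos: "0 < Obj G Kg \<tau> s b" and s: "\<forall>g<G. \<forall>k\<in>Kg g. 0 \<le> s k"
  shows "\<forall>g<G. \<forall>u v. 0 \<le> u\<^sup>2 * Min (b g ` Kg g) + 2 * u * v * (sqrt (Obj G Kg \<tau> s b) * sqrt (\<tau> g * real (card (Kg g)))) + v\<^sup>2 * (\<Sum>k\<in>Kg g. s k)"
proof (intro allI impI)
  fix g u v assume g: "g < G"
  define c where "c = \<tau> g * real (card (Kg g))"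
  define S where "S = (\<Sum>k\<in>Kg g. s k)"
  define R where "R = Min (b g ` Kg g)"
  define Ob where "Ob = Obj G Kg \<tau> s b"
  have c: "c > 0" unfolding c_def using tau fin ne g by (simp add: card_gt_0_iff)
  have S: "S \<ge> 0" unfolding S_def using s g by (intro sum_nonneg) auto
  have "Ob \<le> S / c * R" unfolding Ob_def Obj_def S_def c_def R_def using g fin by (intro Min_le) auto
  with pos Ob_def have OSR: "0 < Ob" "Ob \<le> S / c * R" by auto
  then have "0 < S / c * R" by linarith
  then have Rp: "R > 0" using S c by (simp add: zero_less_mult_iff zero_less_divide_iff)
  have "(sqrt Ob * sqrt c)\<^sup>2 = Ob * c" using OSR c by (simp add: power_mult_distrib)
  also have "\<dots> \<le> R * S" using OSR c by (simp add: field_simps)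
  finally have "(sqrt Ob * sqrt c)\<^sup>2 \<le> R * S" .
  from quad_nonneg[OF Rp this, of u v]
  show "0 \<le> u\<^sup>2 * Min (b g ` Kg g) + 2 * u * v * (sqrt (Obj G Kg \<tau> s b) * sqrt (\<tau> g * real (card (Kg g)))) + v\<^sup>2 * (\<Sum>k\<in>Kg g. s k)"
    unfolding R_def Ob_def c_def S_def .
qed



lemma re_aff2:
  "Re (\<Sum>x\<in>I. \<Sum>y\<in>J. (A x y + complex_of_real t * (A' x y - A x y)) * w x y)
   = Re (\<Sum>x\<in>I. \<Sum>y\<in>J. A x y * w x y) + t * (Re (\<Sum>x\<in>I. \<Sum>y\<in>J. A' x y * w x y) - Re (\<Sum>x\<in>I. \<Sum>y\<in>J. A x y * w x y))"
proof -
  have "(\<Sum>x\<in>I. \<Sum>y\<in>J. (A x y + complex_of_real t * (A' x y - A x y)) * w x y)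
    = (\<Sum>x\<in>I. \<Sum>y\<in>J. A x y * w x y) + complex_of_real t * ((\<Sum>x\<in>I. \<Sum>y\<in>J. A' x y * w x y) - (\<Sum>x\<in>I. \<Sum>y\<in>J. A x y * w x y))"
    by (simp add: algebra_simps sum.distrib sum_subtractf sum_distrib_left)
  then show ?thesis by simp
qed

lemma re_aff1:
  "Re (\<Sum>i\<in>I. A i + complex_of_real t * (A' i - A i))
   = Re (\<Sum>i\<in>I. A i) + t * (Re (\<Sum>i\<in>I. A' i) - Re (\<Sum>i\<in>I. A i))"
proof -
  have "(\<Sum>i\<in>I. A i + complex_of_real t * (A' i - A i))
    = (\<Sum>i\<in>I. A i) + complex_of_real t * ((\<Sum>i\<in>I. A' i) - (\<Sum>i\<in>I. A i))"
    by (simp add: algebra_simps sum.distrib sum_subtractf sum_distrib_left)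
  then show ?thesis by simp
qed

lemma trhh_affine:
  "trhh B M (\<lambda>x y. A x y + complex_of_real t * (A' x y - A x y)) h
   = trhh B M A h + t * (trhh B M A' h - trhh B M A h)"
  unfolding trhh_def by (rule re_aff2)

lemma trhh_nonneg: assumes "herm_psd B M A" shows "0 \<le> trhh B M A h"
proof -
  have "0 \<le> Re (\<Sum>x\<in>idx B M. \<Sum>y\<in>idx B M. cnj (h x) * A x y * h y)"
    using assms unfolding herm_psd_def by blast
  also have "(\<Sum>x\<in>idx B M. \<Sum>y\<in>idx B M. cnj (h x) * A x y * h y) = (\<Sum>x\<in>idx B M. \<Sum>y\<in>idx B M. A x y * (h y * cnj (h x)))"
    by (simp add: mult_ac)
  finally show ?thesis unfolding trhh_def .
qed

lemma herm_psd_conv: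
  assumes "herm_psd B M A" "herm_psd B M A'" "0 \<le> t" "t \<le> 1"
  shows "herm_psd B M (\<lambda>x y. A x y + complex_of_real t * (A' x y - A x y))"
  unfolding herm_psd_def
proof (intro conjI ballI allI)
  fix x y assume xy: "x \<in> idx B M" "y \<in> idx B M"
  have h1: "A y x = cnj (A x y)" using assms(1) xy unfolding herm_psd_def by blast
  have h2: "A' y x = cnj (A' x y)" using assms(2) xy unfolding herm_psd_def by blast
  show "A y x + complex_of_real t * (A' y x - A y x) = cnj (A x y + complex_of_real t * (A' x y - A x y))"
    unfolding h1 h2 by simp
next
  fix v :: cvec
  have e1: "\<And>A. (\<Sum>x\<in>idx B M. \<Sum>y\<in>idx B M. cnj (v x) * A x y * v y) = (\<Sum>x\<in>idx B M. \<Sum>y\<in>idx B M. A x y * (cnj (v x) * v y))"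
    by (simp add: mult_ac)
  have "Re (\<Sum>x\<in>idx B M. \<Sum>y\<in>idx B M. (A x y + complex_of_real t * (A' x y - A x y)) * (cnj (v x) * v y))
     = Re (\<Sum>x\<in>idx B M. \<Sum>y\<in>idx B M. A x y * (cnj (v x) * v y)) + t * (Re (\<Sum>x\<in>idx B M. \<Sum>y\<in>idx B M. A' x y * (cnj (v x) * v y)) - Re (\<Sum>x\<in>idx B M. \<Sum>y\<in>idx B M. A x y * (cnj (v x) * v y)))"
    by (rule re_aff2)
  moreover have "0 \<le> Re (\<Sum>x\<in>idx B M. \<Sum>y\<in>idx B M. cnj (v x) * A x y * v y)"
    using assms(1) unfolding herm_psd_def by blast
  then have "0 \<le> Re (\<Sum>x\<in>idx B M. \<Sum>y\<in>idx B M. A x y * (cnj (v x) * v y))"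
    by (simp only: e1)
  moreover have "0 \<le> Re (\<Sum>x\<in>idx B M. \<Sum>y\<in>idx B M. cnj (v x) * A' x y * v y)"
    using assms(2) unfolding herm_psd_def by blast
  then have "0 \<le> Re (\<Sum>x\<in>idx B M. \<Sum>y\<in>idx B M. A' x y * (cnj (v x) * v y))"
    by (simp only: e1)
  moreover have "\<And>X Y :: real. 0 \<le> X \<Longrightarrow> 0 \<le> Y \<Longrightarrow> 0 \<le> X + t * (Y - X)"
  proof -
    fix X Y :: real assume "0 \<le> X" "0 \<le> Y"
    have "X + t * (Y - X) = (1 - t) * X + t * Y" by (simp add: algebra_simps)
    also have "\<dots> \<ge> 0" using assms(3,4) \<open>0 \<le> X\<close> \<open>0 \<le> Y\<close> by simp
    finally show "0 \<le> X + t * (Y - X)" .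
  qed
  ultimately show "0 \<le> Re (\<Sum>x\<in>idx B M. \<Sum>y\<in>idx B M. cnj (v x) * (A x y + complex_of_real t * (A' x y - A x y)) * v y)"
    unfolding e1 by simp
qed

definition seg :: "(nat \<Rightarrow> cmat) \<Rightarrow> (nat \<Rightarrow> cmat) \<Rightarrow> real \<Rightarrow> nat \<Rightarrow> cmat" where
  "seg Q Q' t = (\<lambda>g x y. Q g x y + complex_of_real t * (Q' g x y - Q g x y))"

lemma feasQ_conv:
  assumes "feasQ B M G P Bg Q" "feasQ B M G P Bg Q'" "0 \<le> t" "t \<le> 1"
  shows "feasQ B M G P Bg (seg Q Q' t)"
  unfolding feasQ_def seg_def
proof (intro conjI allI impI)
  fix g assume "g < G"
  then show "herm_psd B M (\<lambda>x y. Q g x y + complex_of_real t * (Q' g x y - Q g x y))"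
    using assms by (intro herm_psd_conv) (auto simp: feasQ_def)
next
  fix b assume b: "b < B"
  have bt: "blocktr M (\<lambda>x y. Q g x y + complex_of_real t * (Q' g x y - Q g x y)) b
      = (1 - t) * blocktr M (Q g) b + t * blocktr M (Q' g) b" for g
    unfolding blocktr_def by (subst re_aff1) (simp add: algebra_simps)
  have "(\<Sum>g<G. blocktr M (\<lambda>x y. Q g x y + complex_of_real t * (Q' g x y - Q g x y)) b)
     = (1 - t) * (\<Sum>g<G. blocktr M (Q g) b) + t * (\<Sum>g<G. blocktr M (Q' g) b)"
    unfolding bt by (simp add: sum.distrib sum_distrib_left)
  also have "\<dots> \<le> (1 - t) * P b + t * P b"
    using assms b unfolding feasQ_def by (intro add_mono mult_left_mono) auto
  also have "\<dots> = P b" by (simp add: algebra_simps)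
  finally show "(\<Sum>g<G. blocktr M (\<lambda>x y. Q g x y + complex_of_real t * (Q' g x y - Q g x y)) b) \<le> P b" .
next
  fix g b b' i j assume "g < G" "b < B" "b' < B" "b \<notin> Bg g \<or> b' \<notin> Bg g" "i < M" "j < M"
  then show "Q g (b, i) (b', j) + complex_of_real t * (Q' g (b, i) (b', j) - Q g (b, i) (b', j)) = 0"
    using assms unfolding feasQ_def by simp
qed

lemma rate_split:
  assumes g: "g < G" and nn: "\<forall>l<G. 0 \<le> trhh B M (Q l) hk"
  shows "rate B M G hk Q g = log 2 (1 + (\<Sum>l<G. trhh B M (Q l) hk)) - log 2 (1 + (\<Sum>l\<in>{0..<G}-{g}. trhh B M (Q l) hk))"
proof -
  define I where "I = (\<Sum>l\<in>{0..<G}-{g}. trhh B M (Q l) hk)"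
  define S where "S = trhh B M (Q g) hk"
  have I: "0 \<le> I" unfolding I_def using nn by (intro sum_nonneg) auto
  have S: "0 \<le> S" unfolding S_def using nn g by auto
  have T: "(\<Sum>l<G. trhh B M (Q l) hk) = S + I" unfolding S_def I_def
    using sum.remove[of "{..<G}" g "\<lambda>l. trhh B M (Q l) hk"] g by (simp add: atLeast0LessThan)
  have "rate B M G hk Q g = log 2 (1 + S / (I + 1))" unfolding rate_def S_def I_def by simp
  also have "1 + S / (I + 1) = (1 + (S + I)) / (1 + I)" using I by (simp add: field_simps)
  also have "log 2 \<dots> = log 2 (1 + (S + I)) - log 2 (1 + I)" using I S by (simp add: log_divide)
  finally show ?thesis unfolding T I_def .
qed

lemma log_tangent:
  fixes x y :: real assumes "0 \<le> x" "0 \<le> y"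
  shows "log 2 (1 + x) \<le> log 2 (1 + y) + (x - y) / ((1 + y) * ln 2)"
proof -
  have "ln (1 + x) - ln (1 + y) \<le> ((1 + x) - (1 + y)) / (1 + y)" using assms by (intro ln_diff_le) auto
  then have "ln (1 + x) - ln (1 + y) \<le> (x - y) / (1 + y)" by simp
  then have "(ln (1 + x) - ln (1 + y)) / ln 2 \<le> ((x - y) / (1 + y)) / ln 2" by (rule divide_right_mono) simp
  then show ?thesis unfolding log_def by (simp add: diff_divide_distrib divide_divide_eq_left mult.commute)
qed

lemma rate_bar_le:
  assumes g: "g < G" and nn: "\<forall>l<G. 0 \<le> trhh B M (Q l) hk" and nnt: "\<forall>l<G. 0 \<le> trhh B M (Qt l) hk"
  shows "rate_bar B M G hk Q Qt g \<le> rate B M G hk Q g"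
proof -
  have "log 2 (1 + (\<Sum>l\<in>{0..<G}-{g}. trhh B M (Q l) hk)) \<le> log 2 (1 + (\<Sum>l\<in>{0..<G}-{g}. trhh B M (Qt l) hk))
     + ((\<Sum>l\<in>{0..<G}-{g}. trhh B M (Q l) hk) - (\<Sum>l\<in>{0..<G}-{g}. trhh B M (Qt l) hk)) / ((1 + (\<Sum>l\<in>{0..<G}-{g}. trhh B M (Qt l) hk)) * ln 2)"
    using nn nnt by (intro log_tangent sum_nonneg) auto
  then show ?thesis unfolding rate_split[OF g nn] rate_bar_def by (simp add: sum_subtractf)
qed

lemma rate_bar_eq:
  assumes g: "g < G" and nn: "\<forall>l<G. 0 \<le> trhh B M (Q l) hk"
  shows "rate_bar B M G hk Q Q g = rate B M G hk Q g"
  unfolding rate_split[OF g nn] rate_bar_def by simp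



lemma trhh_tendsto:
  assumes "\<forall>x\<in>idx B M. \<forall>y\<in>idx B M. ((\<lambda>n. A n x y) \<longlongrightarrow> Al x y) F"
  shows "((\<lambda>n. trhh B M (A n) h) \<longlongrightarrow> trhh B M Al h) F"
  unfolding trhh_def using assms by (intro tendsto_Re tendsto_sum tendsto_mult_right) auto

lemma rate_tendsto:
  assumes g: "g < G"
    and c: "\<forall>l<G. ((\<lambda>n. trhh B M (A n l) hk) \<longlongrightarrow> trhh B M (Al l) hk) F"
    and nn: "\<forall>l<G. 0 \<le> trhh B M (Al l) hk"
  shows "((\<lambda>n. rate B M G hk (A n) g) \<longlongrightarrow> rate B M G hk Al g) F"
proof -
  have I: "((\<lambda>n. \<Sum>l\<in>{0..<G} - {g}. trhh B M (A n l) hk) \<longlongrightarrow> (\<Sum>l\<in>{0..<G} - {g}. trhh B M (Al l) hk)) F"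
    using c by (intro tendsto_sum) auto
  have I0: "0 \<le> (\<Sum>l\<in>{0..<G} - {g}. trhh B M (Al l) hk)" using nn by (intro sum_nonneg) auto
  have S0: "0 \<le> trhh B M (Al g) hk" using nn g by auto
  have "((\<lambda>n. log 2 (1 + trhh B M (A n g) hk / ((\<Sum>l\<in>{0..<G} - {g}. trhh B M (A n l) hk) + 1)))
     \<longlongrightarrow> log 2 (1 + trhh B M (Al g) hk / ((\<Sum>l\<in>{0..<G} - {g}. trhh B M (Al l) hk) + 1))) F"
  proof (intro tendsto_intros I)
    show "((\<lambda>n. trhh B M (A n g) hk) \<longlongrightarrow> trhh B M (Al g) hk) F" using c g by auto
    show "(\<Sum>l\<in>{0..<G} - {g}. trhh B M (Al l) hk) + 1 \<noteq> 0" using I0 by linarith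
    have "0 \<le> trhh B M (Al g) hk / ((\<Sum>l\<in>{0..<G} - {g}. trhh B M (Al l) hk) + 1)" using I0 S0 by simp
    then show "1 + trhh B M (Al g) hk / ((\<Sum>l\<in>{0..<G} - {g}. trhh B M (Al l) hk) + 1) \<noteq> 0" by linarith
  qed (use c in auto)
  then show ?thesis unfolding rate_def .
qed

lemma rate_bar_tendsto:
  assumes g: "g < G"
    and c: "\<forall>l<G. ((\<lambda>n. trhh B M (A n l) hk) \<longlongrightarrow> trhh B M (Al l) hk) F"
    and nn: "\<forall>l<G. 0 \<le> trhh B M (Al l) hk"
  shows "((\<lambda>n. rate_bar B M G hk Q (A n) g) \<longlongrightarrow> rate_bar B M G hk Q Al g) F"
proof -
  have I: "((\<lambda>n. \<Sum>l\<in>{0..<G} - {g}. trhh B M (A n l) hk) \<longlongrightarrow> (\<Sum>l\<in>{0..<G} - {g}. trhh B M (Al l) hk)) F"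
    using c by (intro tendsto_sum) auto
  have I': "((\<lambda>n. \<Sum>l\<in>{0..<G} - {g}. trhh B M (Q l) hk - trhh B M (A n l) hk) \<longlongrightarrow> (\<Sum>l\<in>{0..<G} - {g}. trhh B M (Q l) hk - trhh B M (Al l) hk)) F"
    using c by (intro tendsto_sum tendsto_diff tendsto_const) auto
  have I0: "0 \<le> (\<Sum>l\<in>{0..<G} - {g}. trhh B M (Al l) hk)" using nn by (intro sum_nonneg) auto
  have "0 < ln (2::real)" by simp
  show ?thesis unfolding rate_bar_def
  proof (intro tendsto_intros I I')
    show "1 + (\<Sum>l\<in>{0..<G} - {g}. trhh B M (Al l) hk) \<noteq> 0" using I0 by linarith
    show "(1 + (\<Sum>l\<in>{0..<G} - {g}. trhh B M (Al l) hk)) * ln 2 \<noteq> 0" using I0 by simp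
  qed (use c in auto)
qed

lemma trhh_seg: "trhh B M (seg Q Q' t l) h = trhh B M (Q l) h + t * (trhh B M (Q' l) h - trhh B M (Q l) h)"
  unfolding seg_def by (rule trhh_affine)

lemma sum_aff: fixes a b :: "nat \<Rightarrow> real" shows "(\<Sum>l\<in>L. a l + t * (b l - a l)) = (\<Sum>l\<in>L. a l) + t * ((\<Sum>l\<in>L. b l) - (\<Sum>l\<in>L. a l))"
  proof -
  have "(\<Sum>l\<in>L. t * (b l - a l)) = t * ((\<Sum>l\<in>L. b l) - (\<Sum>l\<in>L. a l))"
    by (simp add: sum_distrib_left sum_subtractf right_diff_distrib)
  then show ?thesis by (simp add: sum.distrib)
qed

lemma rate_rd:
  assumes g: "g < G" and nn: "\<forall>l<G. 0 \<le> trhh B M (Q l) hk" and dl: "\<delta> \<noteq> 0"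
  shows "\<exists>D. rd (\<lambda>t. rate B M G hk (seg Q Q' t) g + (1 - (s k + t * (s' k - s k))) / \<delta>) D"
proof -
  define S0 where "S0 = trhh B M (Q g) hk"
  define S1 where "S1 = trhh B M (Q' g) hk"
  define I0 where "I0 = (\<Sum>l\<in>{0..<G} - {g}. trhh B M (Q l) hk)"
  define I1 where "I1 = (\<Sum>l\<in>{0..<G} - {g}. trhh B M (Q' l) hk)"
  have I0: "0 \<le> I0" unfolding I0_def using nn by (intro sum_nonneg) auto
  have S0: "0 \<le> S0" unfolding S0_def using nn g by auto
  have eq: "rate B M G hk (seg Q Q' t) g = log 2 (1 + (S0 + t * (S1 - S0)) / ((I0 + t * (I1 - I0)) + 1))" for t
    unfolding rate_def trhh_seg sum_aff S0_def S1_def I0_def I1_def ..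
  have "\<exists>D. ((\<lambda>t. log 2 (1 + (S0 + t * (S1 - S0)) / ((I0 + t * (I1 - I0)) + 1)) + (1 - (s k + t * (s' k - s k))) / \<delta>) has_real_derivative D) (at 0)"
    apply (rule exI)
    apply (rule derivative_eq_intros refl | use I0 S0 dl in \<open>simp add: add_pos_nonneg\<close>)+
    done
  then obtain D where "((\<lambda>t. log 2 (1 + (S0 + t * (S1 - S0)) / ((I0 + t * (I1 - I0)) + 1)) + (1 - (s k + t * (s' k - s k))) / \<delta>) has_real_derivative D) (at 0)" by blast
  then show ?thesis unfolding eq by (blast intro: rd_deriv)
qed

lemma trhh_seg_nonneg:
  assumes "0 \<le> trhh B M (Q l) hk" "0 \<le> trhh B M (Q' l) hk" "0 \<le> t" "t \<le> 1"
  shows "0 \<le> trhh B M (seg Q Q' t l) hk"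
proof -
  have "trhh B M (seg Q Q' t l) hk = (1 - t) * trhh B M (Q l) hk + t * trhh B M (Q' l) hk"
    unfolding trhh_seg by (simp add: algebra_simps)
  then show ?thesis using assms by simp
qed

lemma tangent:
  assumes g: "g < G" and nn: "\<forall>l<G. 0 \<le> trhh B M (Q l) hk" and nn': "\<forall>l<G. 0 \<le> trhh B M (Q' l) hk"
  shows "((\<lambda>t. (rate B M G hk (seg Q Q' t) g - rate_bar B M G hk (seg Q Q' t) Q g) / t) \<longlongrightarrow> 0) (at_right 0)"
proof -
  define I0 where "I0 = (\<Sum>l\<in>{0..<G} - {g}. trhh B M (Q l) hk)"
  define I1 where "I1 = (\<Sum>l\<in>{0..<G} - {g}. trhh B M (Q' l) hk)"
  have I0: "0 \<le> I0" unfolding I0_def using nn by (intro sum_nonneg) auto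
  define \<psi> where "\<psi> t = log 2 (1 + I0) + (t * (I1 - I0)) / ((1 + I0) * ln 2) - log 2 (1 + (I0 + t * (I1 - I0)))" for t
  have "(\<psi> has_real_derivative 0) (at 0)"
    unfolding \<psi>_def
    apply (rule derivative_eq_intros refl | use I0 in simp)+
    done
  then have "rd \<psi> 0" by (rule rd_deriv)
  then have L: "((\<lambda>t. \<psi> t / t) \<longlongrightarrow> 0) (at_right 0)" unfolding rd_def \<psi>_def by simp
  have E: "eventually (\<lambda>t. \<psi> t / t = (rate B M G hk (seg Q Q' t) g - rate_bar B M G hk (seg Q Q' t) Q g) / t) (at_right (0::real))"
    using eventually_at_right_less[of 0] eventually_at_right[of 0 1]
  proof -
    have "eventually (\<lambda>t::real. 0 < t \<and> t < 1) (at_right 0)"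
      unfolding eventually_at_right_field by (intro exI[of _ 1]) auto
    then show ?thesis
    proof (rule eventually_mono)
      fix t :: real assume t: "0 < t \<and> t < 1"
      have nnt: "\<forall>l<G. 0 \<le> trhh B M (seg Q Q' t l) hk"
        using nn nn' t by (auto intro: trhh_seg_nonneg)
      have It: "(\<Sum>l\<in>{0..<G} - {g}. trhh B M (seg Q Q' t l) hk) = I0 + t * (I1 - I0)"
        unfolding trhh_seg sum_aff I0_def I1_def ..
      have Id: "(\<Sum>l\<in>{0..<G} - {g}. trhh B M (seg Q Q' t l) hk - trhh B M (Q l) hk) = t * (I1 - I0)"
        using It unfolding sum_subtractf I0_def by simp
      have "rate B M G hk (seg Q Q' t) g - rate_bar B M G hk (seg Q Q' t) Q g = \<psi> t"
        unfolding rate_split[OF g nnt] rate_bar_def It Id \<psi>_def I0_def[symmetric] by simp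
      then show "\<psi> t / t = (rate B M G hk (seg Q Q' t) g - rate_bar B M G hk (seg Q Q' t) Q g) / t" by simp
    qed
  qed
  show ?thesis by (rule tendsto_cong[THEN iffD1, OF E L])
qed

lemma a_rd: assumes "c \<noteq> 0" shows "\<exists>D. rd (\<lambda>t. (\<Sum>k\<in>K. s k + t * (s' k - s k)) / c) D"
proof -
  have "((\<lambda>t. (\<Sum>k\<in>K. s k + t * (s' k - s k)) / c) has_real_derivative (\<Sum>k\<in>K. s' k - s k) / c) (at 0)"
    using assms by (auto intro!: derivative_eq_intros)
  then show ?thesis by (blast intro: rd_deriv)
qed



lemma objF_Obj: "objF B M G Kg \<tau> \<delta> h Q s = Obj G Kg \<tau> s (\<lambda>g k. rate B M G (h k) Q g + (1 - s k) / \<delta>)"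
  by (simp add: objF_def Obj_def)

lemma feasQ_trhh: "feasQ B M G P Bg Q \<Longrightarrow> l < G \<Longrightarrow> 0 \<le> trhh B M (Q l) hk"
  unfolding feasQ_def by (blast intro: trhh_nonneg)

lemma feasQ_limit:
  assumes F: "\<forall>n. feasQ B M G P Bg (A n)"
    and c: "\<forall>g<G. \<forall>x\<in>idx B M. \<forall>y\<in>idx B M. (\<lambda>n. A n g x y) \<longlonglongrightarrow> Al g x y"
  shows "feasQ B M G P Bg Al"
  unfolding feasQ_def
proof (intro conjI allI impI)
  fix g assume g: "g < G"
  show "herm_psd B M (Al g)"
    unfolding herm_psd_def
  proof (intro conjI ballI allI)
    fix x y assume xy: "x \<in> idx B M" "y \<in> idx B M"
    have "(\<lambda>n. A n g y x) \<longlonglongrightarrow> Al g y x" using c g xy by auto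
    moreover have "\<forall>n. A n g y x = cnj (A n g x y)"
      using F g xy unfolding feasQ_def herm_psd_def by blast
    then have "(\<lambda>n. A n g y x) = (\<lambda>n. cnj (A n g x y))" by (intro ext) blast
    moreover have "(\<lambda>n. cnj (A n g x y)) \<longlonglongrightarrow> cnj (Al g x y)" using c g xy by (intro tendsto_cnj) auto
    ultimately show "Al g y x = cnj (Al g x y)" by (metis (no_types) LIMSEQ_unique)
  next
    fix v :: cvec
    have "(\<lambda>n. Re (\<Sum>x\<in>idx B M. \<Sum>y\<in>idx B M. cnj (v x) * A n g x y * v y))
        \<longlonglongrightarrow> Re (\<Sum>x\<in>idx B M. \<Sum>y\<in>idx B M. cnj (v x) * Al g x y * v y)"
      using c g by (intro tendsto_Re tendsto_sum tendsto_mult tendsto_const) auto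
    moreover have "\<forall>n. 0 \<le> Re (\<Sum>x\<in>idx B M. \<Sum>y\<in>idx B M. cnj (v x) * A n g x y * v y)"
      using F g unfolding feasQ_def herm_psd_def by blast
    ultimately show "0 \<le> Re (\<Sum>x\<in>idx B M. \<Sum>y\<in>idx B M. cnj (v x) * Al g x y * v y)"
      by (intro LIMSEQ_le_const) auto
  qed
next
  fix b assume b: "b < B"
  have "(\<lambda>n. \<Sum>g<G. blocktr M (A n g) b) \<longlonglongrightarrow> (\<Sum>g<G. blocktr M (Al g) b)"
    unfolding blocktr_def using c b by (intro tendsto_sum tendsto_Re) (auto simp: idx_def)
  moreover have "\<forall>n. (\<Sum>g<G. blocktr M (A n g) b) \<le> P b" using F b unfolding feasQ_def by blast
  ultimately show "(\<Sum>g<G. blocktr M (Al g) b) \<le> P b" by (intro LIMSEQ_le_const2) auto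
next
  fix g b b' i j assume as: "g < G" "b < B" "b' < B" "b \<notin> Bg g \<or> b' \<notin> Bg g" "i < M" "j < M"
  have "(\<lambda>n. A n g (b, i) (b', j)) \<longlonglongrightarrow> Al g (b, i) (b', j)" using c as by (auto simp: idx_def)
  moreover have "\<forall>n. A n g (b, i) (b', j) = 0" using F as unfolding feasQ_def by blast
  ultimately have "(\<lambda>n. 0) \<longlonglongrightarrow> Al g (b, i) (b', j)" by simp
  then show "Al g (b, i) (b', j) = 0" using LIMSEQ_unique[OF tendsto_const] by metis
qed



theorem proposition1:
  fixes B M G :: nat
    and P :: "nat \<Rightarrow> real"
    and Bg :: "nat \<Rightarrow> nat set"
    and Kg :: "nat \<Rightarrow> 'u set"
    and \<tau> :: "nat \<Rightarrow> real"
    and \<delta> :: real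
    and h :: "'u \<Rightarrow> cvec"
    and Qs :: "nat \<Rightarrow> nat \<Rightarrow> cmat"
    and Rs :: "nat \<Rightarrow> nat \<Rightarrow> real"
    and ss :: "nat \<Rightarrow> 'u \<Rightarrow> real"
    and \<alpha>s :: "nat \<Rightarrow> real"
    and Qlim :: "nat \<Rightarrow> cmat"
    and slim :: "'u \<Rightarrow> real"
  assumes delta_pos: "\<delta> > 0"
    and G_pos: "G \<ge> 1"
    and P_nonneg: "\<forall>b<B. P b \<ge> 0"
    and Bg_sub: "\<forall>g<G. Bg g \<subseteq> {0..<B}"
    and tau_pos: "\<forall>g<G. \<tau> g > 0"
    and Kg_fin: "\<forall>g<G. finite (Kg g)"
    and Kg_ne: "\<forall>g<G. Kg g \<noteq> {}"
    and Kg_disj: "\<forall>g<G. \<forall>g'<G. g \<noteq> g' \<longrightarrow> Kg g \<inter> Kg g' = {}"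
    and init: "feasQ B M G P Bg (Qs 0)"
    and iter: "\<forall>n. optSub B M G P Bg Kg \<tau> \<delta> h (Qs n)
                     (Qs (Suc n)) (Rs (Suc n)) (ss (Suc n)) (\<alpha>s (Suc n))"
    and lim: "limit_point B M G (\<Union>g<G. Kg g) Qs ss Qlim slim"
  shows "stationaryR B M G P Bg Kg \<tau> \<delta> h Qlim slim"
proof -
  define F where "F Q s = objF B M G Kg \<tau> \<delta> h Q s" for Q s
  define Fb where "Fb Qt Q s = Obj G Kg \<tau> s (\<lambda>g k. rate_bar B M G (h k) Q Qt g + (1 - s k) / \<delta>)" for Qt Q s
  have feasSub: "feasSub B M G P Bg Kg \<tau> \<delta> h (Qs n) (Qs (Suc n)) (Rs (Suc n)) (ss (Suc n)) (\<alpha>s (Suc n))" for n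
    using iter unfolding optSub_def by blast
  have feas: "feasQ B M G P Bg (Qs n)" for n
    using init feasSub by (cases n) (auto simp: feasSub_def)
  have nnQ: "0 \<le> trhh B M (Qs n l) hk" if "l < G" for n l hk
    using feasQ_trhh[OF feas that] .
  have card_pos: "\<tau> g * real (card (Kg g)) > 0" if "g < G" for g
    using tau_pos Kg_fin Kg_ne that by (simp add: card_gt_0_iff)
  have aF: "(\<alpha>s (Suc m))\<^sup>2 \<le> F (Qs (Suc m)) (ss (Suc m))" for m
  proof -
    have fs: "feasSub B M G P Bg Kg \<tau> \<delta> h (Qs m) (Qs (Suc m)) (Rs (Suc m)) (ss (Suc m)) (\<alpha>s (Suc m))"
      by (rule feasSub)
    have "\<forall>g<G. \<forall>k\<in>Kg g. Rs (Suc m) g \<le> rate B M G (h k) (Qs (Suc m)) g + (1 - ss (Suc m) k) / \<delta>"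
    proof (intro allI impI ballI)
      fix g k assume g: "g < G" and k: "k \<in> Kg g"
      have "Rs (Suc m) g \<le> rate_bar B M G (h k) (Qs (Suc m)) (Qs m) g + (1 - ss (Suc m) k) / \<delta>"
        using fs g k unfolding feasSub_def by blast
      also have "rate_bar B M G (h k) (Qs (Suc m)) (Qs m) g \<le> rate B M G (h k) (Qs (Suc m)) g"
        using g nnQ by (intro rate_bar_le) auto
      finally show "Rs (Suc m) g \<le> rate B M G (h k) (Qs (Suc m)) g + (1 - ss (Suc m) k) / \<delta>" by simp
    qed
    then show ?thesis unfolding F_def objF_Obj
      using fs G_pos Kg_fin Kg_ne tau_pos unfolding feasSub_def by (intro Obj_lower[where R = "Rs (Suc m)"]) auto
  qed
  have amono: "\<alpha>s (Suc m) \<le> \<alpha>s (Suc (Suc m))" for m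
  proof -
    have fs: "feasSub B M G P Bg Kg \<tau> \<delta> h (Qs m) (Qs (Suc m)) (Rs (Suc m)) (ss (Suc m)) (\<alpha>s (Suc m))"
      by (rule feasSub)
    have "feasSub B M G P Bg Kg \<tau> \<delta> h (Qs (Suc m)) (Qs (Suc m)) (Rs (Suc m)) (ss (Suc m)) (\<alpha>s (Suc m))"
      unfolding feasSub_def
    proof (intro conjI)
      show "\<forall>g<G. \<forall>k\<in>Kg g. Rs (Suc m) g \<le> rate_bar B M G (h k) (Qs (Suc m)) (Qs (Suc m)) g + (1 - ss (Suc m) k) / \<delta>"
      proof (intro allI impI ballI)
        fix g k assume g: "g < G" and k: "k \<in> Kg g"
        have "Rs (Suc m) g \<le> rate_bar B M G (h k) (Qs (Suc m)) (Qs m) g + (1 - ss (Suc m) k) / \<delta>"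
          using fs g k unfolding feasSub_def by blast
        also have "rate_bar B M G (h k) (Qs (Suc m)) (Qs m) g \<le> rate B M G (h k) (Qs (Suc m)) g"
          using g nnQ by (intro rate_bar_le) auto
        also have "rate B M G (h k) (Qs (Suc m)) g = rate_bar B M G (h k) (Qs (Suc m)) (Qs (Suc m)) g"
          using g nnQ by (intro rate_bar_eq[symmetric]) auto
        finally show "Rs (Suc m) g \<le> rate_bar B M G (h k) (Qs (Suc m)) (Qs (Suc m)) g + (1 - ss (Suc m) k) / \<delta>" by simp
      qed
    qed (use fs in \<open>auto simp: feasSub_def\<close>)
    then show ?thesis using iter[rule_format, of "Suc m"] unfolding optSub_def by blast
  qed
  have amono': "\<alpha>s m \<le> \<alpha>s n" if "1 \<le> m" "m \<le> n" for m n
  proof -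
    have "\<alpha>s (Suc (m - 1)) \<le> \<alpha>s (Suc (n - 1))"
      using lift_Suc_mono_le[of "\<lambda>i. \<alpha>s (Suc i)", OF amono, of "m - 1" "n - 1"] that by simp
    then show ?thesis using that by simp
  qed
  have Fbup: "sqrt (Fb (Qs n) Q' s') \<le> \<alpha>s (Suc n)"
    if fr: "feasR B M G P Bg (\<Union>g<G. Kg g) Q' s'" and pos: "0 < Fb (Qs n) Q' s'" for n Q' s'
  proof -
    define R' where "R' g = Min ((\<lambda>k. rate_bar B M G (h k) Q' (Qs n) g + (1 - s' k) / \<delta>) ` Kg g)" for g
    have lmi: "\<forall>g<G. \<forall>u v. 0 \<le> u\<^sup>2 * R' g + 2 * u * v * (sqrt (Fb (Qs n) Q' s') * sqrt (\<tau> g * real (card (Kg g)))) + v\<^sup>2 * (\<Sum>k\<in>Kg g. s' k)"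
      unfolding R'_def Fb_def
      using fr pos G_pos Kg_fin Kg_ne tau_pos unfolding Fb_def feasR_def
      by (intro Obj_upper) auto
    have "feasSub B M G P Bg Kg \<tau> \<delta> h (Qs n) Q' R' s' (sqrt (Fb (Qs n) Q' s'))"
      unfolding feasSub_def
    proof (intro conjI)
      show "\<forall>g<G. \<forall>k\<in>Kg g. R' g \<le> rate_bar B M G (h k) Q' (Qs n) g + (1 - s' k) / \<delta>"
        unfolding R'_def using Kg_fin by (auto intro: Min_le)
    qed (use lmi fr in \<open>auto simp: feasR_def\<close>)
    then show ?thesis using iter[rule_format, of n] unfolding optSub_def by blast
  qed
  obtain \<sigma> where \<sigma>: "strict_mono \<sigma>"
    and Qc: "\<forall>g<G. \<forall>x\<in>idx B M. \<forall>y\<in>idx B M. (\<lambda>n. Qs (\<sigma> n) g x y) \<longlonglongrightarrow> Qlim g x y"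
    and sc: "\<forall>k\<in>(\<Union>g<G. Kg g). (\<lambda>n. ss (\<sigma> n) k) \<longlonglongrightarrow> slim k"
    using lim unfolding limit_point_def by blast
  have feasL: "feasQ B M G P Bg Qlim"
    using feas Qc by (intro feasQ_limit[where A = "\<lambda>n. Qs (\<sigma> n)"]) auto
  have nnL: "0 \<le> trhh B M (Qlim l) hk" if "l < G" for l hk
    using feasQ_trhh[OF feasL that] .
  have trc: "\<forall>l<G. ((\<lambda>n. trhh B M (Qs (\<sigma> n) l) hk) \<longlongrightarrow> trhh B M (Qlim l) hk) sequentially" for hk
    using Qc by (auto intro: trhh_tendsto)
  have \<sigma>ge: "eventually (\<lambda>n. m \<le> \<sigma> n) sequentially" for m
    using \<sigma> by (metis eventually_sequentiallyI le_trans seq_suble)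
  have sbound: "\<forall>k\<in>(\<Union>g<G. Kg g). 0 \<le> ss (Suc m) k \<and> ss (Suc m) k \<le> 1" for m
    using feasSub[of m] unfolding feasSub_def by blast
  have sL: "\<forall>k\<in>(\<Union>g<G. Kg g). 0 \<le> slim k \<and> slim k \<le> 1"
  proof
    fix k assume k: "k \<in> (\<Union>g<G. Kg g)"
    have ev: "eventually (\<lambda>n. 0 \<le> ss (\<sigma> n) k \<and> ss (\<sigma> n) k \<le> 1) sequentially"
      using \<sigma>ge[of 1]
    proof (rule eventually_mono)
      fix n assume "1 \<le> \<sigma> n"
      then obtain m where "\<sigma> n = Suc m" by (cases "\<sigma> n") auto
      then show "0 \<le> ss (\<sigma> n) k \<and> ss (\<sigma> n) k \<le> 1" using sbound[of m] k by (simp only:)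
    qed
    have lk: "(\<lambda>n. ss (\<sigma> n) k) \<longlonglongrightarrow> slim k" using sc k by blast
    have "0 \<le> slim k" using ev by (intro tendsto_lowerbound[OF lk]) (auto elim: eventually_mono)
    moreover have "slim k \<le> 1" using ev by (intro tendsto_upperbound[OF lk]) (auto elim: eventually_mono)
    ultimately show "0 \<le> slim k \<and> slim k \<le> 1" by simp
  qed
  define Fs where "Fs = F Qlim slim"
  have Fconv: "(\<lambda>n. F (Qs (\<sigma> n)) (ss (\<sigma> n))) \<longlonglongrightarrow> Fs"
    unfolding F_def Fs_def objF_Obj
  proof (rule Obj_tendsto[OF G_pos Kg_fin Kg_ne])
    show "\<forall>g<G. \<forall>k\<in>Kg g. (\<lambda>n. ss (\<sigma> n) k) \<longlonglongrightarrow> slim k" using sc by blast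
    show "\<forall>g<G. \<forall>k\<in>Kg g. (\<lambda>n. rate B M G (h k) (Qs (\<sigma> n)) g + (1 - ss (\<sigma> n) k) / \<delta>) \<longlonglongrightarrow> rate B M G (h k) Qlim g + (1 - slim k) / \<delta>"
    proof (intro allI impI ballI)
      fix g k assume g: "g < G" and k: "k \<in> Kg g"
      have "(\<lambda>n. rate B M G (h k) (Qs (\<sigma> n)) g) \<longlonglongrightarrow> rate B M G (h k) Qlim g"
        using g trc nnL by (intro rate_tendsto) auto
      moreover have "(\<lambda>n. ss (\<sigma> n) k) \<longlonglongrightarrow> slim k" using sc g k by blast
      ultimately show "(\<lambda>n. rate B M G (h k) (Qs (\<sigma> n)) g + (1 - ss (\<sigma> n) k) / \<delta>) \<longlonglongrightarrow> rate B M G (h k) Qlim g + (1 - slim k) / \<delta>"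
        using delta_pos by (intro tendsto_intros) auto
    qed
  qed
  have evF: "eventually (\<lambda>n. (\<alpha>s (\<sigma> n))\<^sup>2 \<le> F (Qs (\<sigma> n)) (ss (\<sigma> n))) sequentially"
    using \<sigma>ge[of 1]
  proof (rule eventually_mono)
    fix n assume "1 \<le> \<sigma> n"
    then obtain m where "\<sigma> n = Suc m" by (cases "\<sigma> n") auto
    then show "(\<alpha>s (\<sigma> n))\<^sup>2 \<le> F (Qs (\<sigma> n)) (ss (\<sigma> n))" using aF[of m] by simp
  qed
  have Fs_nn: "0 \<le> Fs"
    using Fconv evF by (intro tendsto_lowerbound[OF Fconv]) (auto elim!: eventually_mono intro: order_trans[OF zero_le_power2])
  have aSup: "\<alpha>s m \<le> sqrt Fs" if m: "1 \<le> m" for m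
  proof (rule tendsto_lowerbound)
    show "(\<lambda>n. sqrt (F (Qs (\<sigma> n)) (ss (\<sigma> n)))) \<longlonglongrightarrow> sqrt Fs" using Fconv by (rule tendsto_real_sqrt)
    show "eventually (\<lambda>n. \<alpha>s m \<le> sqrt (F (Qs (\<sigma> n)) (ss (\<sigma> n)))) sequentially"
      using \<sigma>ge[of m] evF
    proof (rule eventually_elim2)
      fix n assume "m \<le> \<sigma> n" "(\<alpha>s (\<sigma> n))\<^sup>2 \<le> F (Qs (\<sigma> n)) (ss (\<sigma> n))"
      then show "\<alpha>s m \<le> sqrt (F (Qs (\<sigma> n)) (ss (\<sigma> n)))"
        using amono'[of m "\<sigma> n"] m real_le_rsqrt by (meson order_trans)
    qed
  qed simp
  have FbL: "Fb Qlim Q' s' \<le> Fs" if fr: "feasR B M G P Bg (\<Union>g<G. Kg g) Q' s'" for Q' s'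
  proof (cases "0 < Fb Qlim Q' s'")
    case False then show ?thesis using Fs_nn by linarith
  next
    case True
    have conv: "(\<lambda>n. Fb (Qs (\<sigma> n)) Q' s') \<longlonglongrightarrow> Fb Qlim Q' s'"
      unfolding Fb_def
    proof (rule Obj_tendsto[OF G_pos Kg_fin Kg_ne])
      show "\<forall>g<G. \<forall>k\<in>Kg g. (\<lambda>n. s' k) \<longlonglongrightarrow> s' k" by simp
      show "\<forall>g<G. \<forall>k\<in>Kg g. (\<lambda>n. rate_bar B M G (h k) Q' (Qs (\<sigma> n)) g + (1 - s' k) / \<delta>) \<longlonglongrightarrow> rate_bar B M G (h k) Q' Qlim g + (1 - s' k) / \<delta>"
      proof (intro allI impI ballI)
        fix g k assume g: "g < G" and k: "k \<in> Kg g"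
        have "(\<lambda>n. rate_bar B M G (h k) Q' (Qs (\<sigma> n)) g) \<longlonglongrightarrow> rate_bar B M G (h k) Q' Qlim g"
          using g trc nnL by (intro rate_bar_tendsto) auto
        then show "(\<lambda>n. rate_bar B M G (h k) Q' (Qs (\<sigma> n)) g + (1 - s' k) / \<delta>) \<longlonglongrightarrow> rate_bar B M G (h k) Q' Qlim g + (1 - s' k) / \<delta>"
          by (intro tendsto_intros)
      qed
    qed
    have evpos: "eventually (\<lambda>n. 0 < Fb (Qs (\<sigma> n)) Q' s') sequentially"
      using order_tendstoD(1)[OF conv True] .
    have "sqrt (Fb Qlim Q' s') \<le> sqrt Fs"
    proof (rule tendsto_upperbound)
      show "(\<lambda>n. sqrt (Fb (Qs (\<sigma> n)) Q' s')) \<longlonglongrightarrow> sqrt (Fb Qlim Q' s')" using conv by (rule tendsto_real_sqrt)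
      show "eventually (\<lambda>n. sqrt (Fb (Qs (\<sigma> n)) Q' s') \<le> sqrt Fs) sequentially"
        using evpos
      proof (rule eventually_mono)
        fix n assume "0 < Fb (Qs (\<sigma> n)) Q' s'"
        then have "sqrt (Fb (Qs (\<sigma> n)) Q' s') \<le> \<alpha>s (Suc (\<sigma> n))" using Fbup fr by blast
        also have "\<dots> \<le> sqrt Fs" by (rule aSup) simp
        finally show "sqrt (Fb (Qs (\<sigma> n)) Q' s') \<le> sqrt Fs" .
      qed
    qed simp
    then show ?thesis by simp
  qed
  show ?thesis unfolding stationaryR_def
  proof (intro conjI allI impI)
    show "feasR B M G P Bg (\<Union>g<G. Kg g) Qlim slim" using feasL sL unfolding feasR_def by blast
    fix Q' s' assume fr: "feasR B M G P Bg (\<Union>g<G. Kg g) Q' s'"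
    have feasQ': "feasQ B M G P Bg Q'" using fr unfolding feasR_def by blast
    have s'b: "\<forall>k\<in>(\<Union>g<G. Kg g). 0 \<le> s' k \<and> s' k \<le> 1" using fr unfolding feasR_def by blast
    have nn': "0 \<le> trhh B M (Q' l) hk" if "l < G" for l hk using feasQ_trhh[OF feasQ' that] .
    define st where "st t = (\<lambda>k. slim k + t * (s' k - slim k))" for t :: real
    define \<Phi> where "\<Phi> t = F (seg Qlim Q' t) (st t)" for t
    define a where "a g t = (\<Sum>k\<in>Kg g. st t k) / (\<tau> g * real (card (Kg g)))" for g t
    have \<Phi>0: "\<Phi> 0 = Fs" by (simp add: \<Phi>_def Fs_def seg_def st_def)
    have "\<exists>D. rd \<Phi> D"
      unfolding \<Phi>_def F_def objF_Obj
    proof (rule Obj_rd[OF G_pos Kg_fin Kg_ne])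
      show "\<forall>g<G. \<exists>D. rd (\<lambda>t. (\<Sum>k\<in>Kg g. st t k) / (\<tau> g * real (card (Kg g)))) D"
        unfolding st_def using card_pos by (intro allI impI a_rd) (metis less_irrefl)
      show "\<forall>g<G. \<forall>k\<in>Kg g. \<exists>D. rd (\<lambda>t. rate B M G (h k) (seg Qlim Q' t) g + (1 - st t k) / \<delta>) D"
        unfolding st_def using nnL delta_pos by (intro allI impI ballI rate_rd) auto
    qed
    then obtain D where D: "rd \<Phi> D" by blast
    have lim: "((\<lambda>t. (\<Phi> t - Fs) / t) \<longlongrightarrow> D) (at_right 0)" using D \<Phi>0 unfolding rd_def by simp
    have same: "(\<lambda>t. (objF B M G Kg \<tau> \<delta> h (\<lambda>g x y. Qlim g x y + complex_of_real t * (Q' g x y - Qlim g x y))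
                    (\<lambda>k. slim k + t * (s' k - slim k)) - objF B M G Kg \<tau> \<delta> h Qlim slim) / t)
               = (\<lambda>t. (\<Phi> t - Fs) / t)"
      by (simp add: \<Phi>_def F_def Fs_def st_def seg_def)
    define E where "E t = (\<Sum>g<G. \<bar>a g t\<bar> * (\<Sum>k\<in>Kg g. \<bar>(rate B M G (h k) (seg Qlim Q' t) g - rate_bar B M G (h k) (seg Qlim Q' t) Qlim g) / t\<bar>))" for t
    have Elim: "(E \<longlongrightarrow> 0) (at_right 0)"
    proof -
      have "(E \<longlongrightarrow> (\<Sum>g<G. \<bar>a g 0\<bar> * (\<Sum>k\<in>Kg g. \<bar>0\<bar>))) (at_right 0)"
        unfolding E_def
      proof (intro tendsto_sum tendsto_mult tendsto_rabs)
        fix g assume g: "g \<in> {..<G}"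
        have "\<exists>D. rd (a g) D" unfolding a_def st_def using card_pos g by (intro a_rd) (metis lessThan_iff less_irrefl)
        then show "((\<lambda>t. a g t) \<longlongrightarrow> a g 0) (at_right 0)" using rd_cont by blast
        fix k assume "k \<in> Kg g"
        show "((\<lambda>t. (rate B M G (h k) (seg Qlim Q' t) g - rate_bar B M G (h k) (seg Qlim Q' t) Qlim g) / t) \<longlongrightarrow> 0) (at_right 0)"
          using g nnL nn' by (intro tangent) auto
      qed
      then show ?thesis by simp
    qed
    have ev: "eventually (\<lambda>t. (\<Phi> t - Fs) / t \<le> E t) (at_right 0)"
    proof -
      have "eventually (\<lambda>t::real. 0 < t \<and> t < 1) (at_right 0)"
        unfolding eventually_at_right_field by (intro exI[of _ 1]) auto
      then show ?thesis
      proof (rule eventually_mono)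
        fix t :: real assume t: "0 < t \<and> t < 1"
        have frt: "feasR B M G P Bg (\<Union>g<G. Kg g) (seg Qlim Q' t) (st t)"
          unfolding feasR_def
        proof
          show "feasQ B M G P Bg (seg Qlim Q' t)" using feasL feasQ' t by (intro feasQ_conv) auto
          show "\<forall>k\<in>(\<Union>g<G. Kg g). 0 \<le> st t k \<and> st t k \<le> 1"
          proof
            fix k assume k: "k \<in> (\<Union>g<G. Kg g)"
            have e: "st t k = (1 - t) * slim k + t * s' k" unfolding st_def by (simp add: algebra_simps)
            have b: "0 \<le> slim k" "slim k \<le> 1" "0 \<le> s' k" "s' k \<le> 1" using sL s'b k by auto
            have m: "(1 - t) * slim k \<le> (1 - t) * 1" "t * s' k \<le> t * 1"
              using b t by (intro mult_left_mono; simp)+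
            have p: "0 \<le> (1 - t) * slim k" "0 \<le> t * s' k" using b t by simp_all
            have "0 \<le> st t k" unfolding e using p by simp
            moreover have "st t k \<le> (1 - t) * 1 + t * 1" unfolding e using m by (rule add_mono)
            then have "st t k \<le> 1" by simp
            ultimately have "0 \<le> st t k \<and> st t k \<le> 1" by blast
            then show "0 \<le> st t k \<and> st t k \<le> 1" by simp
          qed
        qed
        have "Fb Qlim (seg Qlim Q' t) (st t) \<le> Fs" by (rule FbL[OF frt])
        moreover have "\<Phi> t - Fb Qlim (seg Qlim Q' t) (st t) \<le>
            (\<Sum>g<G. \<bar>a g t\<bar> * (\<Sum>k\<in>Kg g. \<bar>rate B M G (h k) (seg Qlim Q' t) g - rate_bar B M G (h k) (seg Qlim Q' t) Qlim g\<bar>))"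
          using Obj_diff[OF G_pos Kg_fin Kg_ne, of \<tau> "st t" "\<lambda>g k. rate B M G (h k) (seg Qlim Q' t) g + (1 - st t k) / \<delta>"
              "\<lambda>g k. rate_bar B M G (h k) (seg Qlim Q' t) Qlim g + (1 - st t k) / \<delta>"]
          unfolding \<Phi>_def F_def objF_Obj Fb_def a_def by simp
        ultimately have "\<Phi> t - Fs \<le> (\<Sum>g<G. \<bar>a g t\<bar> * (\<Sum>k\<in>Kg g. \<bar>rate B M G (h k) (seg Qlim Q' t) g - rate_bar B M G (h k) (seg Qlim Q' t) Qlim g\<bar>))"
          by linarith
        then have "(\<Phi> t - Fs) / t \<le> (\<Sum>g<G. \<bar>a g t\<bar> * (\<Sum>k\<in>Kg g. \<bar>rate B M G (h k) (seg Qlim Q' t) g - rate_bar B M G (h k) (seg Qlim Q' t) Qlim g\<bar>)) / t"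
          using t by (intro divide_right_mono) auto
        also have "\<dots> = E t"
        proof -
          have eqg: "\<And>g. \<bar>a g t\<bar> * (\<Sum>k\<in>Kg g. \<bar>(rate B M G (h k) (seg Qlim Q' t) g - rate_bar B M G (h k) (seg Qlim Q' t) Qlim g) / t\<bar>)
             = \<bar>a g t\<bar> * (\<Sum>k\<in>Kg g. \<bar>rate B M G (h k) (seg Qlim Q' t) g - rate_bar B M G (h k) (seg Qlim Q' t) Qlim g\<bar>) / t"
            using t by (simp add: abs_divide sum_divide_distrib[symmetric] abs_of_pos)
          show ?thesis unfolding E_def by (simp only: eqg sum_divide_distrib)
        qed
        finally show "(\<Phi> t - Fs) / t \<le> E t" .
      qed
    qed
    have "D \<le> 0" by (rule tendsto_le[OF _ Elim lim ev]) simp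
    then show "\<exists>D. ((\<lambda>t. (objF B M G Kg \<tau> \<delta> h (\<lambda>g x y. Qlim g x y + complex_of_real t * (Q' g x y - Qlim g x y))
                    (\<lambda>k. slim k + t * (s' k - slim k)) - objF B M G Kg \<tau> \<delta> h Qlim slim) / t) \<longlongrightarrow> D) (at_right 0)
             \<and> D \<le> 0"
      unfolding same using lim by blast
  qed
qed

end
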